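(* Let $\mathbb{F}$ be a finite field, let $m\ge 1$, and let $d\ge 0$, $d_z\ge 1$, $D\ge 0$ be integers. Let $A(\mathbf{x},z)\in\mathbb{F}[x_1,\dots,x_m,z]$ be a non-zero polynomial with $\deg_z A\le d_z$ and $(1,1,\dots,1,d)$-weighted degree at most $D$. Let $\mathbf{b}\in\mathbb{F}^m$ be such that the univariate polynomial $A(\mathbf{b},z)\in\mathbb{F}[z]$ is non-zero and has no repeated roots (in an algebraic closure of $\mathbb{F}$). Let $S\subseteq\mathbb{F}^m$ be a set of directions such that for every $\mathbf{u}\in S$ there is a univariate polynomial $P_{\mathbf{b},\mathbf{u}}(t)\in\mathbb{F}[t]$ of degree at most $d$ with $$A(\mathbf{b}+t\mathbf{u},\,P_{\mathbf{b},\mathbf{u}}(t))\equiv 0 \quad\text{in }\mathbb{F}[t].$$ If $|S|> d_z\, D\,|\mathbb{F}|^{m-1}$, then there exists a polynomial $P(\mathbf{x})\in\mathbb{F}[x_1,\dots,x_m]$ of total degree at most $d$ such that $A(\mathbf{x},P(\mathbf{x}))\equiv 0$. Moreover, there is a set $S'\subseteq S$ with $|S'|\ge |S|/d_z$ such that for every $\mathbf{u}\in S'$ we have $P(\mathbf{b}+t\mathbf{u})=P_{\mathbf{b},\mathbf{u}}(t)$ as polynomials in $t$.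
   Context: For a polynomial $g(x_1,\dots,x_n)$ and a weight vector $\mathbf{w}=(w_1,\dots,w_n)\in\mathbb{N}^n$, the $\mathbf{w}$-weighted degree of $g$ is the maximum of $w_1e_1+\cdots+w_ne_n$ over monomials $x_1^{e_1}\cdots x_n^{e_n}$ with non-zero coefficient in $g$. Here the weight is $1$ on each $x_i$ and $d$ on $z$. *)

theory Defs
  imports "HOL-Library.Poly_Mapping" "HOL-Algebra.Algebraic_Closure_Type"
begin

text \<open>Variable i has index i;
  for F[x_1,...,x_m,z] the variables x_1..x_m are indices 0..m-1 and z is index m.\<close>

type_synonym 'a mpoly = "(nat \<Rightarrow>\<^sub>0 nat) \<Rightarrow>\<^sub>0 'a"

definition mvars_in :: "'a::zero mpoly \<Rightarrow> nat set \<Rightarrow> bool" where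
  "mvars_in p V \<longleftrightarrow> (\<forall>\<alpha>\<in>Poly_Mapping.keys p. Poly_Mapping.keys \<alpha> \<subseteq> V)"

definition deg_in :: "'a::zero mpoly \<Rightarrow> nat \<Rightarrow> nat" where
  "deg_in p i = Max (insert 0 ((\<lambda>\<alpha>. Poly_Mapping.lookup \<alpha> i) ` Poly_Mapping.keys p))"

definition weighted_deg :: "(nat \<Rightarrow> nat) \<Rightarrow> 'a::zero mpoly \<Rightarrow> nat" where
  "weighted_deg w p = Max (insert 0 ((\<lambda>\<alpha>. \<Sum>i\<in>Poly_Mapping.keys \<alpha>. w i * Poly_Mapping.lookup \<alpha> i) ` Poly_Mapping.keys p))"

definition total_deg :: "'a::zero mpoly \<Rightarrow> nat" where
  "total_deg p = weighted_deg (\<lambda>_. 1) p"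

definition mpoly_eval :: "('a::zero \<Rightarrow> 'b::comm_semiring_1) \<Rightarrow> 'a mpoly \<Rightarrow> (nat \<Rightarrow> 'b) \<Rightarrow> 'b" where
  "mpoly_eval \<phi> p f = (\<Sum>\<alpha>\<in>Poly_Mapping.keys p. \<phi> (Poly_Mapping.lookup p \<alpha>) * (\<Prod>i\<in>Poly_Mapping.keys \<alpha>. f i ^ Poly_Mapping.lookup \<alpha> i))"

definition mpoly_const :: "'a::zero \<Rightarrow> 'a mpoly" where
  "mpoly_const c = Poly_Mapping.single 0 c"

definition mpoly_var :: "nat \<Rightarrow> 'a::{zero,one} mpoly" where
  "mpoly_var i = Poly_Mapping.single (Poly_Mapping.single i 1) 1"

end

theory Submission
  imports Defs
begin



definition rhom :: "('a::comm_ring_1 \<Rightarrow> 'b::comm_ring_1) \<Rightarrow> bool" where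
  "rhom h \<longleftrightarrow> h 0 = 0 \<and> h 1 = 1 \<and> (\<forall>x y. h (x + y) = h x + h y) \<and> (\<forall>x y. h (x * y) = h x * h y)"

lemma rhomD:
  assumes "rhom h"
  shows "h 0 = 0" "h 1 = 1" "h (x + y) = h x + h y" "h (x * y) = h x * h y"
  using assms unfolding rhom_def by auto

lemma rhom_uminus: "rhom h \<Longrightarrow> h (- x) = - h x"
  using rhomD(1)[of h] rhomD(3)[of h x "-x"] by (simp add: eq_neg_iff_add_eq_0 add.commute)

lemma rhom_diff: "rhom h \<Longrightarrow> h (x - y) = h x - h y"
  using rhomD(3)[of h x "-y"] rhom_uminus[of h y] by simp

lemma rhom_sum: "rhom h \<Longrightarrow> h (sum f A) = (\<Sum>a\<in>A. h (f a))"
  by (induction A rule: infinite_finite_induct) (auto simp: rhomD)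

lemma rhom_prod: "rhom h \<Longrightarrow> h (prod f A) = (\<Prod>a\<in>A. h (f a))"
  by (induction A rule: infinite_finite_induct) (auto simp: rhomD)

lemma rhom_power: "rhom h \<Longrightarrow> h (x ^ n) = h x ^ n"
  by (induction n) (auto simp: rhomD)

lemma rhom_of_nat: "rhom h \<Longrightarrow> h (of_nat n) = of_nat n"
  by (induction n) (auto simp: rhomD)

lemma rhom_comp: "rhom h \<Longrightarrow> rhom g \<Longrightarrow> rhom (\<lambda>x. g (h x))"
  by (simp add: rhom_def)

lemma rhom_id: "rhom (\<lambda>x. x)" by (simp add: rhom_def)

lemma rhom_pConst: "rhom (\<lambda>c. [:c:])"
  by (simp add: rhom_def one_pCons)

lemma rhom_poly: "rhom (\<lambda>p. poly p x)"
  by (simp add: rhom_def)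

lemma rhom_mpoly_const: "rhom (mpoly_const :: 'a::comm_ring_1 \<Rightarrow> 'a mpoly)"
  by (simp add: rhom_def mpoly_const_def single_add mult_single)

lemma rhom_to_ac: "rhom (to_ac :: 'a::field \<Rightarrow> 'a alg_closure)"
  by (simp add: rhom_def)

lemma rhom_map_poly:
  assumes h: "rhom h"
  shows "rhom (map_poly h)"
proof -
  have h0: "h 0 = 0" using h by (rule rhomD)
  have add: "map_poly h (p + q) = map_poly h p + map_poly h q" for p q
    by (rule poly_eqI) (simp add: coeff_map_poly h0 rhomD[OF h])
  have mult: "map_poly h (p * q) = map_poly h p * map_poly h q" for p q
    by (rule poly_eqI) (simp add: coeff_map_poly h0 coeff_mult rhomD[OF h] rhom_sum[OF h])
  show ?thesis unfolding rhom_def using add mult h0 rhomD(2)[OF h] by simp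
qed

lemma map_poly_pderiv_rhom:
  assumes h: "rhom h"
  shows "map_poly h (pderiv p) = pderiv (map_poly h p)"
  by (rule poly_eqI) (simp add: coeff_map_poly rhomD[OF h] coeff_pderiv rhom_of_nat[OF h])

lemma poly_rhom:
  assumes h: "rhom h"
  shows "h (poly p x) = poly (map_poly h p) (h x)"
proof (induction p)
  case 0 then show ?case using rhomD[OF h] by simp
next
  case (pCons a p)
  have "map_poly h (pCons a p) = pCons (h a) (map_poly h p)"
    by (simp add: map_poly_pCons rhomD[OF h])
  then show ?case using pCons by (simp add: rhomD[OF h])
qed




definition mon :: "(nat \<Rightarrow>\<^sub>0 nat) \<Rightarrow> (nat \<Rightarrow> 'b::comm_semiring_1) \<Rightarrow> 'b" where
  "mon \<alpha> f = (\<Prod>i\<in>Poly_Mapping.keys \<alpha>. f i ^ Poly_Mapping.lookup \<alpha> i)"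

lemma mpoly_eval_mon: "mpoly_eval \<phi> p f = (\<Sum>\<alpha>\<in>Poly_Mapping.keys p. \<phi> (Poly_Mapping.lookup p \<alpha>) * mon \<alpha> f)"
  by (simp add: mpoly_eval_def mon_def)

lemma mon_superset:
  assumes "finite I" "Poly_Mapping.keys \<alpha> \<subseteq> I"
  shows "mon \<alpha> f = (\<Prod>i\<in>I. f i ^ Poly_Mapping.lookup \<alpha> i)"
  unfolding mon_def
  by (rule prod.mono_neutral_left) (use assms in \<open>auto simp: in_keys_iff\<close>)

lemma mon_zero [simp]: "mon 0 f = 1"
  by (simp add: mon_def)

lemma mon_add: "mon (\<alpha> + \<beta>) f = mon \<alpha> f * mon \<beta> f"
proof -
  let ?I = "Poly_Mapping.keys \<alpha> \<union> Poly_Mapping.keys \<beta>"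
  have "mon (\<alpha> + \<beta>) f = (\<Prod>i\<in>?I. f i ^ Poly_Mapping.lookup (\<alpha> + \<beta>) i)"
    by (rule mon_superset) (use keys_add[of \<alpha> \<beta>] in auto)
  also have "\<dots> = (\<Prod>i\<in>?I. f i ^ Poly_Mapping.lookup \<alpha> i) * (\<Prod>i\<in>?I. f i ^ Poly_Mapping.lookup \<beta> i)"
    by (simp add: lookup_add power_add prod.distrib)
  also have "\<dots> = mon \<alpha> f * mon \<beta> f"
    by (subst (1 2) mon_superset[of ?I]) auto
  finally show ?thesis .
qed

lemma mon_cong: "(\<And>i. i \<in> Poly_Mapping.keys \<alpha> \<Longrightarrow> f i = g i) \<Longrightarrow> mon \<alpha> f = mon \<alpha> g"
  by (simp add: mon_def)

lemma mpoly_eval_superset: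
  assumes "\<phi> 0 = 0" "finite K" "Poly_Mapping.keys p \<subseteq> K"
  shows "mpoly_eval \<phi> p f = (\<Sum>\<alpha>\<in>K. \<phi> (Poly_Mapping.lookup p \<alpha>) * mon \<alpha> f)"
  unfolding mpoly_eval_mon
  by (rule sum.mono_neutral_left) (use assms in \<open>auto simp: in_keys_iff\<close>)

lemma mpoly_eval_0 [simp]: "mpoly_eval \<phi> 0 f = 0"
  by (simp add: mpoly_eval_def)

lemma mpoly_eval_add:
  assumes "rhom \<phi>"
  shows "mpoly_eval \<phi> (p + q) f = mpoly_eval \<phi> p f + mpoly_eval \<phi> q f"
proof -
  let ?K = "Poly_Mapping.keys p \<union> Poly_Mapping.keys q"
  have "mpoly_eval \<phi> (p + q) f = (\<Sum>\<alpha>\<in>?K. \<phi> (Poly_Mapping.lookup (p+q) \<alpha>) * mon \<alpha> f)"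
    by (rule mpoly_eval_superset) (use keys_add[of p q] in \<open>auto simp: rhomD[OF assms]\<close>)
  also have "\<dots> = (\<Sum>\<alpha>\<in>?K. \<phi> (Poly_Mapping.lookup p \<alpha>) * mon \<alpha> f) + (\<Sum>\<alpha>\<in>?K. \<phi> (Poly_Mapping.lookup q \<alpha>) * mon \<alpha> f)"
    by (simp add: lookup_add rhomD[OF assms] distrib_right sum.distrib)
  also have "\<dots> = mpoly_eval \<phi> p f + mpoly_eval \<phi> q f"
    by (subst (1 2) mpoly_eval_superset[of \<phi> ?K]) (auto simp: rhomD[OF assms])
  finally show ?thesis .
qed

lemma mpoly_eval_single:
  assumes "\<phi> 0 = 0"
  shows "mpoly_eval \<phi> (Poly_Mapping.single \<alpha> c) f = \<phi> c * mon \<alpha> f"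
  using assms by (simp add: mpoly_eval_mon)

lemma update_as_add:
  "a \<notin> Poly_Mapping.keys g \<Longrightarrow> Poly_Mapping.update a b g = g + Poly_Mapping.single a b"
  by (rule poly_mapping_eqI) (auto simp: lookup_update lookup_add lookup_single in_keys_iff when_def)

lemma pm_induct [case_names zero add]:
  assumes "P 0" "\<And>g a b. P g \<Longrightarrow> P (g + Poly_Mapping.single a b)"
  shows "P p"
proof (induction p rule: update_induct)
  case const then show ?case using assms by simp
next
  case (update a b f) then show ?case using assms(2) by (simp add: update_as_add)
qed

lemma mpoly_eval_mult:
  assumes "rhom \<phi>"
  shows "mpoly_eval \<phi> (p * q) f = mpoly_eval \<phi> p f * mpoly_eval \<phi> q f"
proof -
  note h0 = rhomD(1)[OF assms]
  have single: "mpoly_eval \<phi> (Poly_Mapping.single a b * q) f = mpoly_eval \<phi> (Poly_Mapping.single a b) f * mpoly_eval \<phi> q f" for a b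
  proof (induction q rule: pm_induct)
    case zero then show ?case by simp
  next
    case (add g c e)
    have "Poly_Mapping.single a b * (g + Poly_Mapping.single c e) = Poly_Mapping.single a b * g + Poly_Mapping.single (a+c) (b*e)"
      by (simp add: distrib_left mult_single)
    then show ?case using add
      by (simp add: mpoly_eval_add[OF assms] mpoly_eval_single[of \<phi>, OF h0] rhomD[OF assms] mon_add distrib_left algebra_simps)
  qed
  show ?thesis
  proof (induction p rule: pm_induct)
    case zero then show ?case by simp
  next
    case (add g a b)
    then show ?case
      by (simp add: distrib_right mpoly_eval_add[OF assms] single)
  qed
qed

lemma mpoly_eval_1 [simp]:
  assumes "rhom \<phi>"
  shows "mpoly_eval \<phi> 1 f = 1"
  using assms by (simp add: mpoly_eval_mon rhomD)

lemma rhom_mpoly_eval: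
  assumes "rhom \<phi>"
  shows "rhom (\<lambda>p. mpoly_eval \<phi> p f)"
  unfolding rhom_def using assms by (simp add: mpoly_eval_add mpoly_eval_mult)

lemma mpoly_eval_hom:
  assumes "rhom h"
  shows "h (mpoly_eval \<phi> p f) = mpoly_eval (\<lambda>c. h (\<phi> c)) p (\<lambda>i. h (f i))"
  unfolding mpoly_eval_def
  by (simp add: rhom_sum[OF assms] rhom_prod[OF assms] rhom_power[OF assms] rhomD[OF assms])

lemma mpoly_eval_const [simp]:
  assumes "rhom \<phi>"
  shows "mpoly_eval \<phi> (mpoly_const c) f = \<phi> c"
  using assms by (simp add: mpoly_const_def mpoly_eval_single rhomD)

lemma mpoly_eval_var [simp]:
  assumes "rhom \<phi>"
  shows "mpoly_eval \<phi> (mpoly_var i) f = f i"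
  using assms by (simp add: mpoly_var_def mpoly_eval_single rhomD mon_def)

lemma mpoly_eval_cong:
  assumes "\<And>\<alpha> i. \<alpha> \<in> Poly_Mapping.keys p \<Longrightarrow> i \<in> Poly_Mapping.keys \<alpha> \<Longrightarrow> f i = g i"
  shows "mpoly_eval \<phi> p f = mpoly_eval \<phi> p g"
  unfolding mpoly_eval_def using assms by (intro sum.cong prod.cong) auto




lemma var_power: "(mpoly_var a :: 'a::comm_ring_1 mpoly) ^ b = Poly_Mapping.single (Poly_Mapping.single a b) 1"
proof (induction b)
  case 0 then show ?case by simp
next
  case (Suc b)
  then show ?case
    by (simp add: mpoly_var_def mult_single single_add[symmetric])
qed

lemma mon_var: "mon \<alpha> (mpoly_var :: nat \<Rightarrow> 'a::comm_ring_1 mpoly) = Poly_Mapping.single \<alpha> 1"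
proof (induction \<alpha> rule: pm_induct)
  case zero then show ?case by simp
next
  case (add g a b)
  have "mon (Poly_Mapping.single a b) (mpoly_var :: nat \<Rightarrow> 'a mpoly) = Poly_Mapping.single (Poly_Mapping.single a b) 1"
    by (simp add: mon_def var_power)
  then show ?case using add by (simp add: mon_add mult_single)
qed

lemma mpoly_eval_var_id: "mpoly_eval mpoly_const p mpoly_var = (p :: 'a::comm_ring_1 mpoly)"
proof (induction p rule: pm_induct)
  case zero then show ?case by simp
next
  case (add g a b)
  have "mpoly_eval mpoly_const (g + Poly_Mapping.single a b) mpoly_var = g + mpoly_const b * Poly_Mapping.single a 1"
    using add by (simp add: mpoly_eval_add rhom_mpoly_const mpoly_eval_single[of mpoly_const] rhomD mon_var)
  also have "\<dots> = g + Poly_Mapping.single a b" by (simp add: mpoly_const_def mult_single)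
  finally show ?case .
qed




definition mw :: "(nat \<Rightarrow> nat) \<Rightarrow> (nat \<Rightarrow>\<^sub>0 nat) \<Rightarrow> nat" where
  "mw w \<alpha> = (\<Sum>i\<in>Poly_Mapping.keys \<alpha>. w i * Poly_Mapping.lookup \<alpha> i)"

lemma weighted_deg_mw: "weighted_deg w p = Max (insert 0 (mw w ` Poly_Mapping.keys p))"
  by (simp add: weighted_deg_def mw_def)

lemma wd_ge: "\<alpha> \<in> Poly_Mapping.keys p \<Longrightarrow> mw w \<alpha> \<le> weighted_deg w p"
  unfolding weighted_deg_mw by (rule Max_ge) auto

lemma wd_le: "(\<And>\<alpha>. \<alpha> \<in> Poly_Mapping.keys p \<Longrightarrow> mw w \<alpha> \<le> B) \<Longrightarrow> weighted_deg w p \<le> B"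
  unfolding weighted_deg_mw by (subst Max_le_iff) auto

lemma mw_superset:
  assumes "finite I" "Poly_Mapping.keys \<alpha> \<subseteq> I"
  shows "mw w \<alpha> = (\<Sum>i\<in>I. w i * Poly_Mapping.lookup \<alpha> i)"
  unfolding mw_def by (rule sum.mono_neutral_left) (use assms in \<open>auto simp: in_keys_iff\<close>)

lemma mw_add: "mw w (\<alpha> + \<beta>) = mw w \<alpha> + mw w \<beta>"
proof -
  let ?I = "Poly_Mapping.keys \<alpha> \<union> Poly_Mapping.keys \<beta>"
  have "mw w (\<alpha> + \<beta>) = (\<Sum>i\<in>?I. w i * Poly_Mapping.lookup (\<alpha> + \<beta>) i)"
    by (rule mw_superset) (use keys_add[of \<alpha> \<beta>] in auto)
  also have "\<dots> = (\<Sum>i\<in>?I. w i * Poly_Mapping.lookup \<alpha> i) + (\<Sum>i\<in>?I. w i * Poly_Mapping.lookup \<beta> i)"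
    by (simp add: lookup_add distrib_left sum.distrib)
  also have "\<dots> = mw w \<alpha> + mw w \<beta>"
    by (subst (1 2) mw_superset[of ?I]) auto
  finally show ?thesis .
qed

lemma wd_add: "weighted_deg w (p + q) \<le> max (weighted_deg w p) (weighted_deg w q)"
proof (rule wd_le)
  fix \<alpha> assume "\<alpha> \<in> Poly_Mapping.keys (p + q)"
  then have "\<alpha> \<in> Poly_Mapping.keys p \<or> \<alpha> \<in> Poly_Mapping.keys q" using keys_add[of p q] by auto
  then show "mw w \<alpha> \<le> max (weighted_deg w p) (weighted_deg w q)"
    using wd_ge[of \<alpha> p w] wd_ge[of \<alpha> q w] by auto
qed

lemma wd_uminus: "weighted_deg w (- p) = weighted_deg w p"
  by (simp add: weighted_deg_def keys_minus)

lemma wd_mult: "weighted_deg w (p * q) \<le> weighted_deg w p + weighted_deg w q"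
proof (rule wd_le)
  fix \<gamma> assume "\<gamma> \<in> Poly_Mapping.keys (p * q)"
  then obtain \<alpha> \<beta> where "\<gamma> = \<alpha> + \<beta>" "\<alpha> \<in> Poly_Mapping.keys p" "\<beta> \<in> Poly_Mapping.keys q"
    using keys_mult[of p q] by auto
  then show "mw w \<gamma> \<le> weighted_deg w p + weighted_deg w q"
    using wd_ge[of \<alpha> p w] wd_ge[of \<beta> q w] by (simp add: mw_add)
qed

lemma wd_0 [simp]: "weighted_deg w 0 = 0"
  by (simp add: weighted_deg_def)

lemma wd_const [simp]: "weighted_deg w (mpoly_const c) = 0"
  by (rule le_antisym, rule wd_le) (auto simp: mpoly_const_def mw_def split: if_splits)

lemma wd_var: "weighted_deg w (mpoly_var i :: 'a::zero_neq_one mpoly) = w i"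
  unfolding weighted_deg_mw by (simp add: mpoly_var_def mw_def)

lemma wd_mono:
  assumes "\<And>\<alpha> i. \<alpha> \<in> Poly_Mapping.keys p \<Longrightarrow> i \<in> Poly_Mapping.keys \<alpha> \<Longrightarrow> w i \<le> w' i"
  shows "weighted_deg w p \<le> weighted_deg w' p"
proof (rule wd_le)
  fix \<alpha> assume a: "\<alpha> \<in> Poly_Mapping.keys p"
  have "mw w \<alpha> \<le> mw w' \<alpha>" unfolding mw_def
    by (rule sum_mono) (use assms[OF a] in \<open>auto intro: mult_right_mono\<close>)
  then show "mw w \<alpha> \<le> weighted_deg w' p" using wd_ge[OF a, of w'] by simp
qed

lemma wd_cong:
  assumes "\<And>\<alpha> i. \<alpha> \<in> Poly_Mapping.keys p \<Longrightarrow> i \<in> Poly_Mapping.keys \<alpha> \<Longrightarrow> w i = w' i"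
  shows "weighted_deg w p = weighted_deg w' p"
  using wd_mono[of p w w'] wd_mono[of p w' w] assms by (metis order_refl le_antisym)

lemma eval_degree_bound:
  fixes \<delta> :: "'b::comm_ring_1 \<Rightarrow> nat"
  assumes d0: "\<delta> 0 = 0" and d1: "\<delta> 1 = 0"
    and dadd: "\<And>x y. \<delta> (x + y) \<le> max (\<delta> x) (\<delta> y)"
    and dmult: "\<And>x y. \<delta> (x * y) \<le> \<delta> x + \<delta> y"
    and dphi: "\<And>c. \<delta> (\<phi> c) = 0"
  shows "\<delta> (mpoly_eval \<phi> p f) \<le> weighted_deg (\<lambda>i. \<delta> (f i)) p"
proof -
  have sumb: "\<delta> (sum g A) \<le> B" if "\<And>a. a \<in> A \<Longrightarrow> \<delta> (g a) \<le> B" for g :: "_ \<Rightarrow> 'b" and A B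
    using that
  proof (induction A rule: infinite_finite_induct)
    case (insert x F)
    then have "\<delta> (g x) \<le> B" "\<delta> (sum g F) \<le> B" by auto
    then show ?case using dadd[of "g x" "sum g F"] insert(1,2) by (metis max.bounded_iff order_trans sum.insert)
  qed (auto simp: d0)
  have prodb: "\<delta> (prod g A) \<le> (\<Sum>a\<in>A. \<delta> (g a))" for g :: "_ \<Rightarrow> 'b" and A
  proof (induction A rule: infinite_finite_induct)
    case (insert x F) then show ?case using dmult[of "g x" "prod g F"] by auto
  qed (auto simp: d1)
  have powb: "\<delta> (x ^ n) \<le> n * \<delta> x" for x n
  proof (induction n)
    case (Suc n) then show ?case using dmult[of x "x^n"] by auto
  qed (simp add: d1)
  show ?thesis unfolding mpoly_eval_def
  proof (rule sumb)
    fix \<alpha> assume a: "\<alpha> \<in> Poly_Mapping.keys p"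
    have "\<delta> (\<phi> (Poly_Mapping.lookup p \<alpha>) * (\<Prod>i\<in>Poly_Mapping.keys \<alpha>. f i ^ Poly_Mapping.lookup \<alpha> i))
        \<le> \<delta> (\<Prod>i\<in>Poly_Mapping.keys \<alpha>. f i ^ Poly_Mapping.lookup \<alpha> i)"
      using dmult[of "\<phi> (Poly_Mapping.lookup p \<alpha>)"] dphi by (metis add_0)
    also have "\<dots> \<le> (\<Sum>i\<in>Poly_Mapping.keys \<alpha>. \<delta> (f i ^ Poly_Mapping.lookup \<alpha> i))" by (rule prodb)
    also have "\<dots> \<le> mw (\<lambda>i. \<delta> (f i)) \<alpha>" unfolding mw_def
      by (rule sum_mono) (use powb in \<open>simp add: mult.commute\<close>)
    also have "\<dots> \<le> weighted_deg (\<lambda>i. \<delta> (f i)) p" by (rule wd_ge[OF a])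
    finally show "\<delta> (\<phi> (Poly_Mapping.lookup p \<alpha>) * (\<Prod>i\<in>Poly_Mapping.keys \<alpha>. f i ^ Poly_Mapping.lookup \<alpha> i)) \<le> weighted_deg (\<lambda>i. \<delta> (f i)) p" .
  qed
qed

lemma eval_closed:
  fixes Pr :: "'b::comm_ring_1 \<Rightarrow> bool"
  assumes "Pr 0" "Pr 1" "\<And>x y. Pr x \<Longrightarrow> Pr y \<Longrightarrow> Pr (x + y)" "\<And>x y. Pr x \<Longrightarrow> Pr y \<Longrightarrow> Pr (x * y)"
    "\<And>c. Pr (\<phi> c)"
    "\<And>\<alpha> i. \<alpha> \<in> Poly_Mapping.keys p \<Longrightarrow> i \<in> Poly_Mapping.keys \<alpha> \<Longrightarrow> Pr (f i)"
  shows "Pr (mpoly_eval \<phi> p f)"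
proof -
  have sumc: "Pr (sum g A)" if "\<And>a. a \<in> A \<Longrightarrow> Pr (g a)" for g :: "_ \<Rightarrow> 'b" and A
    using that by (induction A rule: infinite_finite_induct) (auto simp: assms)
  have prodc: "Pr (prod g A)" if "\<And>a. a \<in> A \<Longrightarrow> Pr (g a)" for g :: "_ \<Rightarrow> 'b" and A
    using that by (induction A rule: infinite_finite_induct) (auto simp: assms)
  have powc: "Pr (x ^ n)" if "Pr x" for x n
    using that by (induction n) (auto simp: assms)
  show ?thesis unfolding mpoly_eval_def
    by (intro sumc assms(4) assms(5) prodc powc assms(6))
qed




lemma total_deg_add: "total_deg (p + q) \<le> max (total_deg p) (total_deg q)"
  unfolding total_deg_def by (rule wd_add)
lemma total_deg_mult: "total_deg (p * q) \<le> total_deg p + total_deg q"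
  unfolding total_deg_def by (rule wd_mult)
lemma total_deg_0 [simp]: "total_deg 0 = 0"
  unfolding total_deg_def by simp
lemma total_deg_const [simp]: "total_deg (mpoly_const c) = 0"
  unfolding total_deg_def by simp
lemma total_deg_1 [simp]: "total_deg (1 :: 'a::zero_neq_one mpoly) = 0"
  using total_deg_const[of "1::'a"] by (simp add: mpoly_const_def)
lemma total_deg_var [simp]: "total_deg (mpoly_var i :: 'a::zero_neq_one mpoly) = 1"
  unfolding total_deg_def by (simp add: wd_var)
lemma total_deg_uminus [simp]: "total_deg (- p) = total_deg p"
  unfolding total_deg_def by (rule wd_uminus)
lemma total_deg_diff: "total_deg (p - q :: 'a::ab_group_add mpoly) \<le> max (total_deg p) (total_deg q)"
  using total_deg_add[of p "-q"] by simp

lemma total_deg_eval: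
  fixes \<phi> :: "'a::zero \<Rightarrow> 'b::comm_ring_1 mpoly"
  assumes "\<And>c. total_deg (\<phi> c) = 0"
  shows "total_deg (mpoly_eval \<phi> p f) \<le> weighted_deg (\<lambda>i. total_deg (f i)) p"
  by (rule eval_degree_bound[where \<delta>=total_deg]) (auto simp: assms total_deg_add total_deg_mult)

lemma degree_eval:
  fixes \<phi> :: "'a::zero \<Rightarrow> 'b::comm_ring_1 poly"
  assumes "\<And>c. degree (\<phi> c) = 0"
  shows "degree (mpoly_eval \<phi> p f) \<le> weighted_deg (\<lambda>i. degree (f i)) p"
  by (rule eval_degree_bound[where \<delta>=degree]) (auto simp: assms degree_add_le_max degree_mult_le)

lemma total_deg_sum: "(\<And>a. a \<in> A \<Longrightarrow> total_deg (g a) \<le> B) \<Longrightarrow> total_deg (sum g A) \<le> B"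
proof (induction A rule: infinite_finite_induct)
  case (insert x F)
  then have b: "total_deg (g x) \<le> B" "total_deg (sum g F) \<le> B" by auto
  have "total_deg (sum g (insert x F)) = total_deg (g x + sum g F)" using insert(1,2) by simp
  also have "\<dots> \<le> max (total_deg (g x)) (total_deg (sum g F))" by (rule total_deg_add)
  also have "\<dots> \<le> B" using b by simp
  finally show ?case .
qed auto

lemma mvars_in_0 [simp]: "mvars_in 0 V" by (simp add: mvars_in_def)
lemma mvars_in_1 [simp]: "mvars_in (1::'a::zero_neq_one mpoly) V" by (simp add: mvars_in_def)
lemma mvars_in_const [simp]: "mvars_in (mpoly_const c) V" by (simp add: mvars_in_def mpoly_const_def)
lemma mvars_in_var: "i \<in> V \<Longrightarrow> mvars_in (mpoly_var i :: 'a::zero_neq_one mpoly) V" by (simp add: mvars_in_def mpoly_var_def)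
lemma mvars_in_add: "mvars_in p V \<Longrightarrow> mvars_in q V \<Longrightarrow> mvars_in (p + q) V"
  unfolding mvars_in_def using keys_add[of p q] by blast
lemma mvars_in_uminus: "mvars_in p V \<Longrightarrow> mvars_in (- p) V"
  unfolding mvars_in_def by (simp add: keys_minus)
lemma mvars_in_mult: "mvars_in p V \<Longrightarrow> mvars_in q V \<Longrightarrow> mvars_in (p * q) V"
  unfolding mvars_in_def
proof
  fix \<gamma> assume a: "\<forall>\<alpha>\<in>Poly_Mapping.keys p. Poly_Mapping.keys \<alpha> \<subseteq> V" "\<forall>\<alpha>\<in>Poly_Mapping.keys q. Poly_Mapping.keys \<alpha> \<subseteq> V"
    "\<gamma> \<in> Poly_Mapping.keys (p * q)"
  then obtain \<alpha> \<beta> where "\<gamma> = \<alpha> + \<beta>" "\<alpha> \<in> Poly_Mapping.keys p" "\<beta> \<in> Poly_Mapping.keys q"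
    using keys_mult[of p q] by auto
  moreover have "Poly_Mapping.keys \<alpha> \<subseteq> V" "Poly_Mapping.keys \<beta> \<subseteq> V" using a calculation by auto
  ultimately show "Poly_Mapping.keys \<gamma> \<subseteq> V" using keys_add[of \<alpha> \<beta>] by auto
qed
lemma mvars_in_diff: "mvars_in p V \<Longrightarrow> mvars_in q V \<Longrightarrow> mvars_in (p - q :: 'a::ab_group_add mpoly) V"
  using mvars_in_add[of p V "-q"] mvars_in_uminus[of q V] by simp

lemma mvars_in_eval:
  fixes f :: "nat \<Rightarrow> 'a::comm_ring_1 mpoly"
  assumes "\<And>\<alpha> i. \<alpha> \<in> Poly_Mapping.keys p \<Longrightarrow> i \<in> Poly_Mapping.keys \<alpha> \<Longrightarrow> mvars_in (f i) V"
  shows "mvars_in (mpoly_eval mpoly_const p f) V"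
  by (rule eval_closed[where Pr="\<lambda>x. mvars_in x V"]) (auto simp: assms mvars_in_add mvars_in_mult)

lemma mvars_in_keys: "mvars_in p V \<Longrightarrow> \<alpha> \<in> Poly_Mapping.keys p \<Longrightarrow> i \<in> Poly_Mapping.keys \<alpha> \<Longrightarrow> i \<in> V"
  unfolding mvars_in_def by auto




definition ev_at :: "'a list \<Rightarrow> 'a::comm_ring_1 mpoly \<Rightarrow> 'a" where
  "ev_at u p = mpoly_eval (\<lambda>c. c) p (\<lambda>i. u ! i)"

lemma rhom_ev_at: "rhom (ev_at u)"
  unfolding ev_at_def by (rule rhom_mpoly_eval[OF rhom_id])

definition psplit :: "nat \<Rightarrow> 'a::comm_ring_1 mpoly \<Rightarrow> 'a mpoly poly" where
  "psplit n p = mpoly_eval (\<lambda>c. [:mpoly_const c:]) p (\<lambda>i. if i = n then [:0,1:] else [:mpoly_var i:])"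

lemma rhom_pconst_const: "rhom (\<lambda>c. [:mpoly_const c:])"
  using rhom_comp[OF rhom_mpoly_const rhom_pConst] by simp

definition cdeg :: "'a::zero mpoly poly \<Rightarrow> nat" where
  "cdeg g = Max (insert 0 ((\<lambda>j. total_deg (coeff g j) + j) ` {j. coeff g j \<noteq> 0}))"

lemma cdeg_fin: "finite {j. coeff g j \<noteq> 0}"
  by (rule finite_subset[of _ "{..degree g}"]) (auto intro: le_degree)

lemma cdeg_ge: "coeff g j \<noteq> 0 \<Longrightarrow> total_deg (coeff g j) + j \<le> cdeg g"
  unfolding cdeg_def by (rule Max_ge) (auto simp: cdeg_fin)

lemma cdeg_le: "(\<And>j. coeff g j \<noteq> 0 \<Longrightarrow> total_deg (coeff g j) + j \<le> B) \<Longrightarrow> cdeg g \<le> B"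
  unfolding cdeg_def by (subst Max_le_iff) (auto simp: cdeg_fin)

lemma cdeg_0 [simp]: "cdeg 0 = 0"
  by (rule le_antisym, rule cdeg_le) auto

lemma cdeg_1 [simp]: "cdeg (1 :: 'a::comm_ring_1 mpoly poly) = 0"
proof -
  have "(1 :: 'a mpoly) = mpoly_const 1" by (simp add: mpoly_const_def)
  then show ?thesis
    by (intro le_antisym cdeg_le) (auto simp: coeff_1 split: if_splits)
qed

lemma cdeg_pconst [simp]: "cdeg [:mpoly_const c:] = 0"
  by (rule le_antisym, rule cdeg_le) (auto simp: coeff_pCons split: nat.splits)

lemma cdeg_X: "cdeg [:0, 1 :: 'a::comm_ring_1 mpoly:] \<le> 1"
proof -
  have "(1 :: 'a mpoly) = mpoly_const 1" by (simp add: mpoly_const_def)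
  then show ?thesis
    by (intro cdeg_le) (auto simp: coeff_pCons split: nat.splits)
qed

lemma cdeg_var: "cdeg [:mpoly_var i :: 'a::comm_ring_1 mpoly:] \<le> 1"
  by (intro cdeg_le) (auto simp: coeff_pCons split: nat.splits)

lemma cdeg_add: "cdeg (x + y) \<le> max (cdeg x) (cdeg y)"
proof (rule cdeg_le)
  fix j assume nz: "coeff (x + y) j \<noteq> 0"
  show "total_deg (coeff (x + y) j) + j \<le> max (cdeg x) (cdeg y)"
  proof (cases "coeff x j = 0")
    case True then show ?thesis using nz cdeg_ge[of "x+y" j] cdeg_ge[of y j] by auto
  next
    case False note fx = False
    show ?thesis
    proof (cases "coeff y j = 0")
      case True then show ?thesis using fx cdeg_ge[of x j] by auto
    next
      case False
      then show ?thesis using fx cdeg_ge[of x j] cdeg_ge[of y j] total_deg_add[of "coeff x j" "coeff y j"]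
        by auto
    qed
  qed
qed

lemma cdeg_mult: "cdeg (x * y) \<le> cdeg x + cdeg y"
proof (rule cdeg_le)
  fix n assume nz: "coeff (x * y) n \<noteq> 0"
  let ?B = "cdeg x + cdeg y"
  have cm: "coeff (x * y) n = (\<Sum>i\<le>n. coeff x i * coeff y (n - i))" by (rule coeff_mult)
  then obtain i where i: "i \<le> n" "coeff x i * coeff y (n - i) \<noteq> 0"
    using nz by (metis (no_types, lifting) atMost_iff sum.neutral)
  then have "coeff x i \<noteq> 0" "coeff y (n - i) \<noteq> 0" by auto
  then have "n \<le> ?B" using cdeg_ge[of x i] cdeg_ge[of y "n - i"] i(1) by linarith
  have "total_deg (coeff (x * y) n) \<le> ?B - n" unfolding cm
  proof (rule total_deg_sum)
    fix k assume k: "k \<in> {..n}"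
    show "total_deg (coeff x k * coeff y (n - k)) \<le> ?B - n"
    proof (cases "coeff x k * coeff y (n - k) = 0")
      case True then show ?thesis by simp
    next
      case False
      then have "coeff x k \<noteq> 0" "coeff y (n - k) \<noteq> 0" by auto
      then show ?thesis using cdeg_ge[of x k] cdeg_ge[of y "n-k"] k
        total_deg_mult[of "coeff x k" "coeff y (n - k)"] by auto
    qed
  qed
  then show "total_deg (coeff (x * y) n) + n \<le> ?B" using \<open>n \<le> ?B\<close> by linarith
qed

lemma psplit_poly_var: "poly (psplit n p) (mpoly_var n) = (p :: 'a::comm_ring_1 mpoly)"
proof -
  have "poly (psplit n p) (mpoly_var n) = mpoly_eval mpoly_const p (\<lambda>i. if i = n then mpoly_var n else mpoly_var i)"
    unfolding psplit_def mpoly_eval_hom[OF rhom_poly]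
    by (rule arg_cong2[where f="\<lambda>a b. mpoly_eval a p b"]) (auto simp: fun_eq_iff)
  also have "(\<lambda>i. if i = n then mpoly_var n else mpoly_var i) = mpoly_var" by auto
  finally show ?thesis by (simp add: mpoly_eval_var_id)
qed

lemma mvars_in_sum: "(\<And>a. a \<in> A \<Longrightarrow> mvars_in (g a) V) \<Longrightarrow> mvars_in (sum g A) V"
  by (induction A rule: infinite_finite_induct) (auto intro: mvars_in_add)

lemma psplit_coeff_vars:
  assumes "mvars_in p {..<Suc n}"
  shows "mvars_in (coeff (psplit n p) j) {..<n}"
proof -
  let ?Pr = "\<lambda>g::'a mpoly poly. \<forall>j. mvars_in (coeff g j) {..<n}"
  have "?Pr (psplit n p)" unfolding psplit_def
  proof (rule eval_closed[where Pr="?Pr"])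
    show "?Pr 0" by simp
    show "?Pr 1" by (simp add: coeff_1)
    show "?Pr (x + y)" if "?Pr x" "?Pr y" for x y using that by (simp add: mvars_in_add)
    show "?Pr (x * y)" if "?Pr x" "?Pr y" for x y using that
      by (auto simp: coeff_mult intro!: mvars_in_sum mvars_in_mult)
    show "?Pr [:mpoly_const c:]" for c by (simp add: coeff_pCons split: nat.splits)
    show "?Pr (if i = n then [:0, 1:] else [:mpoly_var i:])" if "\<alpha> \<in> Poly_Mapping.keys p" "i \<in> Poly_Mapping.keys \<alpha>" for \<alpha> i
      using mvars_in_keys[OF assms that] by (auto simp: coeff_pCons mvars_in_var split: nat.splits)
  qed
  then show ?thesis by simp
qed




lemma ev_at_const [simp]: "ev_at v (mpoly_const c) = c"
  by (simp add: ev_at_def rhom_id)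
lemma ev_at_var [simp]: "ev_at v (mpoly_var i) = v ! i"
  by (simp add: ev_at_def rhom_id)
lemma ev_at_1 [simp]: "ev_at v 1 = 1"
  by (simp add: rhomD[OF rhom_ev_at])
lemma ev_at_0 [simp]: "ev_at v 0 = 0"
  by (simp add: rhomD[OF rhom_ev_at])

lemma ev_at_append:
  fixes p :: "'a::comm_ring_1 mpoly"
  assumes "mvars_in p {..<Suc n}" "length v = n"
  shows "ev_at (v @ [a]) p = poly (map_poly (ev_at v) (psplit n p)) a"
proof -
  have H: "rhom (\<lambda>Z. poly (map_poly (ev_at v) Z) a)"
    by (rule rhom_comp[OF rhom_map_poly[OF rhom_ev_at] rhom_poly])
  have ev0: "ev_at v 0 = 0" by (rule rhomD[OF rhom_ev_at])
  have "poly (map_poly (ev_at v) (psplit n p)) a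
      = mpoly_eval (\<lambda>c. c) p (\<lambda>i. if i = n then a else v ! i)"
    unfolding psplit_def mpoly_eval_hom[OF H]
    by (rule arg_cong2[where f="\<lambda>a b. mpoly_eval a p b"])
       (auto simp: fun_eq_iff map_poly_pCons)
  also have "\<dots> = ev_at (v @ [a]) p"
    unfolding ev_at_def
  proof (rule mpoly_eval_cong)
    fix \<alpha> i assume "\<alpha> \<in> Poly_Mapping.keys p" "i \<in> Poly_Mapping.keys \<alpha>"
    then have "i < Suc n" using mvars_in_keys[OF assms(1)] by auto
    then show "(if i = n then a else v ! i) = (v @ [a]) ! i" using assms(2) by (auto simp: nth_append)
  qed
  finally show ?thesis by simp
qed

lemma fin_len: "finite {xs :: 'a::finite list. length xs = n}"
  using finite_lists_length_eq[of "UNIV :: 'a set" n] by simp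

lemma card_len: "card {xs :: 'a::finite list. length xs = n} = card (UNIV :: 'a set) ^ n"
  using card_lists_length_eq[of "UNIV :: 'a set" n] by simp

lemma SZ:
  fixes p :: "'a::{field,finite} mpoly"
  assumes "mvars_in p {..<n}" "p \<noteq> 0"
  shows "card {u. length u = n \<and> ev_at u p = 0} * card (UNIV :: 'a set) \<le> total_deg p * card (UNIV :: 'a set) ^ n"
  using assms
proof (induction n arbitrary: p)
  case 0
  have keys0: "Poly_Mapping.keys p \<subseteq> {0}"
  proof
    fix \<alpha> assume a: "\<alpha> \<in> Poly_Mapping.keys p"
    then have "Poly_Mapping.keys \<alpha> = {}" using mvars_in_keys[OF "0.prems"(1) a] by blast
    then show "\<alpha> \<in> {0}" by simp
  qed
  have "ev_at u p = Poly_Mapping.lookup p 0" for u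
    unfolding ev_at_def by (subst mpoly_eval_superset[OF _ _ keys0]) auto
  moreover have "Poly_Mapping.lookup p 0 \<noteq> 0"
  proof
    assume "Poly_Mapping.lookup p 0 = 0"
    then have "0 \<notin> Poly_Mapping.keys p" by (simp add: in_keys_iff)
    then have "Poly_Mapping.keys p = {}" using keys0 by blast
    then show False using "0.prems"(2) by simp
  qed
  ultimately show ?case by simp
next
  case (Suc n)
  define q where "q = card (UNIV :: 'a set)"
  define g where "g = psplit n p"
  have gp: "poly g (mpoly_var n) = p" unfolding g_def by (rule psplit_poly_var)
  have gnz: "g \<noteq> 0" using gp Suc.prems(2) by auto
  define e where "e = degree g"
  define L where "L = lead_coeff g"
  have Lnz: "L \<noteq> 0" using gnz by (simp add: L_def)
  have Lvars: "mvars_in L {..<n}" unfolding L_def g_def by (rule psplit_coeff_vars[OF Suc.prems(1)])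
  have IH: "card {u. length u = n \<and> ev_at u L = 0} * q \<le> total_deg L * q ^ n"
    unfolding q_def by (rule Suc.IH[OF Lvars Lnz])
  have degs: "total_deg L + e \<le> total_deg p"
  proof -
    have "total_deg L + e \<le> cdeg g" unfolding L_def e_def by (rule cdeg_ge[OF Lnz[unfolded L_def]])
    also have "cdeg g \<le> weighted_deg (\<lambda>i. cdeg (if i = n then [:0,1:] else [:mpoly_var i :: 'a mpoly:])) p"
      unfolding g_def psplit_def
      by (rule eval_degree_bound[where \<delta>=cdeg and \<phi>="\<lambda>c. [:mpoly_const c:]"
            and f="\<lambda>i. if i = n then [:0,1:] else [:mpoly_var i:]" and p=p])
         (auto simp: cdeg_add cdeg_mult)
    also have "\<dots> \<le> weighted_deg (\<lambda>_. 1) p"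
    proof (rule wd_mono)
      fix \<alpha> i
      show "cdeg (if i = n then [:0,1:] else [:mpoly_var i :: 'a mpoly:]) \<le> 1"
      proof (cases "i = n")
        case True then show ?thesis using cdeg_X[where 'a='a] by simp
      next
        case False then show ?thesis using cdeg_var[of i, where 'a='a] by simp
      qed
    qed
    finally show ?thesis by (simp add: total_deg_def)
  qed
  define ZL where "ZL = {v. length v = n \<and> ev_at v L = 0}"
  define B where "B v = {a. ev_at v L \<noteq> 0 \<and> poly (map_poly (ev_at v) g) a = 0}" for v
  define Z1 where "Z1 = (\<lambda>(v, a). v @ [a]) ` (ZL \<times> (UNIV :: 'a set))"
  define Z2 where "Z2 = (\<Union>v\<in>{v. length v = n}. (\<lambda>a. v @ [a]) ` B v)"
  have sub: "{u. length u = Suc n \<and> ev_at u p = 0} \<subseteq> Z1 \<union> Z2"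
  proof
    fix u assume u: "u \<in> {u. length u = Suc n \<and> ev_at u p = 0}"
    then have "u \<noteq> []" by auto
    define v where "v = butlast u"
    define a where "a = last u"
    have uva: "u = v @ [a]" using \<open>u \<noteq> []\<close> by (simp add: v_def a_def)
    have lv: "length v = n" using u by (simp add: v_def)
    have ev: "poly (map_poly (ev_at v) g) a = 0"
      using u ev_at_append[OF Suc.prems(1) lv, of a] by (simp add: uva g_def)
    show "u \<in> Z1 \<union> Z2"
    proof (cases "ev_at v L = 0")
      case True
      then have "(v, a) \<in> ZL \<times> UNIV" using lv by (simp add: ZL_def)
      then show ?thesis unfolding Z1_def uva by force
    next
      case False
      then have "a \<in> B v" using ev by (simp add: B_def)
      then show ?thesis unfolding Z2_def uva using lv by blast
    qed
  qed
  have finZL: "finite ZL" by (rule finite_subset[OF _ fin_len[of n]]) (auto simp: ZL_def)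
  have cZ1: "card Z1 \<le> card ZL * q"
  proof -
    have "card Z1 \<le> card (ZL \<times> (UNIV :: 'a set))" unfolding Z1_def by (rule card_image_le) (simp add: finZL)
    then show ?thesis by (simp add: card_cartesian_product q_def)
  qed
  have cB: "card (B v) \<le> e" for v
  proof (cases "ev_at v L = 0")
    case True then show ?thesis by (simp add: B_def)
  next
    case False
    let ?G = "map_poly (ev_at v) g"
    have "coeff ?G e = ev_at v L" by (simp add: coeff_map_poly L_def e_def)
    then have Gnz: "?G \<noteq> 0" using False by auto
    have "B v = {a. poly ?G a = 0}" using False by (simp add: B_def)
    then have "card (B v) \<le> degree ?G" using card_poly_roots_bound[OF Gnz] by simp
    also have "degree ?G \<le> e" unfolding e_def by (rule map_poly_degree_leq)
    finally show ?thesis .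
  qed
  have cZ2: "card Z2 \<le> q ^ n * e"
  proof -
    have "card Z2 \<le> (\<Sum>v\<in>{v. length v = n}. card ((\<lambda>a. v @ [a]) ` B v))"
      unfolding Z2_def by (rule card_UN_le[OF fin_len])
    also have "\<dots> \<le> (\<Sum>v\<in>{v::'a list. length v = n}. e)"
      by (rule sum_mono) (meson card_image_le cB finite order_trans)
    also have "\<dots> = q ^ n * e" by (simp add: card_len q_def)
    finally show ?thesis .
  qed
  have finZ12: "finite (Z1 \<union> Z2)"
    by (rule finite_subset[OF _ fin_len[of "Suc n"]]) (auto simp: Z1_def Z2_def ZL_def)
  have "card {u. length u = Suc n \<and> ev_at u p = 0} \<le> card (Z1 \<union> Z2)"
    by (rule card_mono[OF finZ12 sub])
  also have "\<dots> \<le> card Z1 + card Z2" by (rule card_Un_le)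
  finally have cZ: "card {u. length u = Suc n \<and> ev_at u p = 0} \<le> card ZL * q + q ^ n * e"
    using cZ1 cZ2 by linarith
  have "card {u. length u = Suc n \<and> ev_at u p = 0} * q \<le> (card ZL * q + q ^ n * e) * q"
    using cZ by (rule mult_right_mono) simp
  also have "\<dots> = (card ZL * q) * q + e * q ^ Suc n" by (simp add: algebra_simps)
  also have "\<dots> \<le> (total_deg L * q ^ n) * q + e * q ^ Suc n"
    using IH unfolding ZL_def by (intro add_right_mono mult_right_mono) auto
  also have "\<dots> = (total_deg L + e) * q ^ Suc n" by (simp add: algebra_simps)
  also have "\<dots> \<le> total_deg p * q ^ Suc n" using degs by (intro mult_right_mono) auto
  finally show ?case by (simp add: q_def)
qed




lemma taylor_split:
  fixes f :: "'r::idom poly poly" and h :: "'r poly"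
  obtains Q where "\<And>g. poly f g = poly f h + (g - h) * poly Q g" "poly (pderiv f) h = poly Q h"
proof -
  have "[:-h, 1:] dvd f - [:poly f h:]" by (subst poly_eq_0_iff_dvd[symmetric]) simp
  then obtain Q where Q: "f - [:poly f h:] = [:-h, 1:] * Q" by (erule dvdE)
  then have f: "f = [:poly f h:] + [:-h, 1:] * Q" by (simp add: algebra_simps)
  have "poly f g = poly f h + (g - h) * poly Q g" for g
    by (subst f) (simp add: algebra_simps)
  moreover have "poly (pderiv f) h = poly Q h"
  proof -
    have d1: "pderiv [:-h, 1:] = 1" by (simp add: pderiv_pCons)
    have d0: "pderiv [:poly f h:] = 0" by (simp add: pderiv_pCons)
    have "pderiv f = [:-h, 1:] * pderiv Q + Q * 1"
      by (subst f) (simp only: pderiv_add pderiv_mult d1 d0 add_0_left)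
    then show ?thesis by simp
  qed
  ultimately show ?thesis by (rule that)
qed

lemma psi0_poly_eq:
  fixes Q :: "'r::idom poly poly"
  assumes "poly g 0 = poly h 0"
  shows "poly (poly Q g) 0 = poly (poly Q h) 0"
  using poly_rhom[OF rhom_poly, of Q g 0] poly_rhom[OF rhom_poly, of Q h 0] assms by simp

lemma psi0_pderiv:
  fixes f :: "'r::idom poly poly"
  shows "poly (poly (pderiv f) h) 0 = poly (pderiv (map_poly (\<lambda>x. poly x 0) f)) (poly h 0)"
  using poly_rhom[OF rhom_poly, of "pderiv f" h 0] map_poly_pderiv_rhom[OF rhom_poly, of 0 f] by simp

lemma monom_dvd_cancel:
  fixes Yp Wp :: "'k::idom poly"
  assumes "poly Wp 0 \<noteq> 0" "monom 1 nn dvd Yp * Wp"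
  shows "monom 1 nn dvd Yp"
  using assms(2)
proof (induction nn arbitrary: Yp)
  case 0 then show ?case by simp
next
  case (Suc nn)
  have m: "monom (1::'k) (Suc nn) = monom 1 1 * monom 1 nn" by (simp add: mult_monom)
  have "monom 1 1 dvd Yp * Wp" using Suc.prems m by (metis dvd_mult_left)
  then have "coeff (Yp * Wp) 0 = 0" by (simp add: monom_1_dvd_iff')
  then have "coeff Yp 0 * coeff Wp 0 = 0" by (simp add: coeff_mult)
  then have "coeff Yp 0 = 0" using assms(1) by (simp add: poly_0_coeff_0)
  then have "monom 1 1 dvd Yp" by (simp add: monom_1_dvd_iff')
  then obtain Yq' where Yq': "Yp = monom 1 1 * Yq'" by (erule dvdE)
  have "monom 1 1 * monom 1 nn dvd monom 1 1 * (Yq' * Wp)" using Suc.prems m Yq' by (simp add: mult.assoc)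
  then have "monom 1 nn dvd Yq' * Wp"
    by (simp add: monom_eq_0_iff)
  then have "monom 1 nn dvd Yq'" by (rule Suc.IH)
  then show ?case using Yq' m by (simp add: mult_dvd_mono)
qed

lemma hensel_unique:
  fixes f :: "'k::idom poly poly" and g h :: "'k poly"
  assumes "poly g 0 = poly h 0" "monom 1 nn dvd poly f g" "monom 1 nn dvd poly f h"
    "poly (poly (pderiv f) h) 0 \<noteq> 0"
  shows "monom 1 nn dvd g - h"
proof -
  obtain Q where Q: "\<And>g. poly f g = poly f h + (g - h) * poly Q g" "poly (pderiv f) h = poly Q h"
    using taylor_split[of f h] by blast
  have W0: "poly (poly Q g) 0 \<noteq> 0"
    using assms(4) Q(2) psi0_poly_eq[OF assms(1), of Q] by simp
  have "monom 1 nn dvd poly f g - poly f h" using assms(2,3) by (rule dvd_diff)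
  then have "monom 1 nn dvd (g - h) * poly Q g" using Q(1)[of g] by simp
  then show ?thesis by (rule monom_dvd_cancel[OF W0])
qed

fun hs :: "'r::idom poly poly \<Rightarrow> 'r \<Rightarrow> 'r \<Rightarrow> nat \<Rightarrow> 'r poly" where
  "hs f s c 0 = [:s:]"
| "hs f s c (Suc k) = hs f s c k - monom (c * coeff (poly f (hs f s c k)) (Suc k)) (Suc k)"

lemma hs_coeff0: "coeff (hs f s c k) 0 = s"
  by (induction k) (auto simp: coeff_monom)

lemma hs_degree: "degree (hs f s c k) \<le> k"
proof (induction k)
  case (Suc k)
  then show ?case
    by (simp del: hs.simps(1)) (meson degree_diff_le degree_monom_le le_SucI order_trans)
qed simp

lemma hs_dvd:
  fixes f :: "'r::idom poly poly"
  assumes root: "poly (map_poly (\<lambda>x. poly x 0) f) s = 0"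
    and inv: "c * poly (pderiv (map_poly (\<lambda>x. poly x 0) f)) s = 1"
  shows "monom 1 (Suc k) dvd poly f (hs f s c k)"
proof (induction k)
  case 0
  have "poly (poly f [:s:]) 0 = 0"
    using poly_rhom[OF rhom_poly, of f "[:s:]" 0] root by simp
  then show ?case by (simp add: monom_1_dvd_iff' poly_0_coeff_0)
next
  case (Suc k)
  define h where "h = hs f s c k"
  define e where "e = coeff (poly f h) (Suc k)"
  define g where "g = hs f s c (Suc k)"
  have gh: "g = h - monom (c * e) (Suc k)" by (simp add: g_def h_def e_def)
  obtain Q where Q: "\<And>g. poly f g = poly f h + (g - h) * poly Q g" "poly (pderiv f) h = poly Q h"
    using taylor_split[of f h] by blast
  have h0: "poly h 0 = s" "poly g 0 = s" by (simp_all add: poly_0_coeff_0 h_def g_def hs_coeff0)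
  have W0: "coeff (poly Q g) 0 = poly (pderiv (map_poly (\<lambda>x. poly x 0) f)) s"
  proof -
    have "coeff (poly Q g) 0 = poly (poly Q h) 0"
      using psi0_poly_eq[of g h Q] h0 by (simp add: poly_0_coeff_0)
    also have "\<dots> = poly (poly (pderiv f) h) 0" using Q(2) by simp
    also have "\<dots> = poly (pderiv (map_poly (\<lambda>x. poly x 0) f)) s" using psi0_pderiv[of f h] h0 by simp
    finally show ?thesis .
  qed
  have IH: "\<forall>j<Suc k. coeff (poly f h) j = 0" using Suc.IH by (simp add: monom_1_dvd_iff' h_def)
  have pf: "poly f g = poly f h - monom (c * e) (Suc k) * poly Q g"
  proof -
    have "g - h = - monom (c * e) (Suc k)" using gh by simp
    then show ?thesis using Q(1)[of g] by simp
  qed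
  have "coeff (poly f g) j = 0" if j: "j < Suc (Suc k)" for j
  proof (cases "j < Suc k")
    case True then show ?thesis using IH by (simp add: pf coeff_monom_mult)
  next
    case False
    then have "j = Suc k" using j by simp
    then show ?thesis using W0 inv by (simp add: pf coeff_monom_mult e_def mult.assoc)
  qed
  then have "monom 1 (Suc (Suc k)) dvd poly f g" by (simp add: monom_1_dvd_iff')
  then show ?case unfolding g_def .
qed




lemma rsqf_deriv:
  fixes p :: "'a::field poly"
  assumes sq: "rsquarefree (map_poly to_ac p)" and rt: "poly p r = 0"
  shows "poly (pderiv p) r \<noteq> 0"
proof
  assume d: "poly (pderiv p) r = 0"
  define P where "P = map_poly to_ac p"
  define a where "a = to_ac r"
  have Pa: "poly P a = 0" using poly_rhom[OF rhom_to_ac, of p r] rt by (simp add: P_def a_def)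
  have Pd: "poly (pderiv P) a = 0"
    using poly_rhom[OF rhom_to_ac, of "pderiv p" r] d map_poly_pderiv_rhom[OF rhom_to_ac, of p]
    by (simp add: P_def a_def)
  have "[:-a, 1:] dvd P" using Pa by (simp add: poly_eq_0_iff_dvd)
  then obtain q where q: "P = [:-a, 1:] * q" by (erule dvdE)
  have d1: "pderiv [:-a, 1:] = 1" by (simp add: pderiv_pCons)
  have "pderiv P = [:-a, 1:] * pderiv q + q * 1"
    by (subst q) (simp only: pderiv_mult d1)
  then have "poly q a = 0" using Pd by simp
  then have "[:-a, 1:] dvd q" by (simp add: poly_eq_0_iff_dvd)
  then obtain q' where q': "q = [:-a, 1:] * q'" by (erule dvdE)
  have "P = [:-a, 1:] ^ 2 * q'" using q q' by (simp only: power2_eq_square mult.assoc)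
  then have dv: "[:-a, 1:] ^ 2 dvd P" by (metis dvd_triv_left)
  have Pnz: "P \<noteq> 0" using sq by (simp add: rsquarefree_def P_def)
  have "order a P = 0 \<or> order a P = 1" using sq by (simp add: rsquarefree_def P_def)
  then have "Suc (order a P) \<le> 2" by auto
  then have "[:-a, 1:] ^ Suc (order a P) dvd [:-a, 1:] ^ 2" by (rule le_imp_power_dvd)
  then have "[:-a, 1:] ^ Suc (order a P) dvd P" using dv by (rule dvd_trans)
  then show False using order_2[OF Pnz] by blast
qed

lemma monom_dvd_deg_zero:
  fixes p :: "'k::comm_ring_1 poly"
  assumes "monom 1 n dvd p" "degree p < n"
  shows "p = 0"
proof (rule poly_eqI)
  fix j
  show "coeff p j = coeff 0 j"
  proof (cases "j < n")
    case True then show ?thesis using assms(1) by (simp add: monom_1_dvd_iff')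
  next
    case False then show ?thesis using assms(2) by (simp add: coeff_eq_0)
  qed
qed

lemma rhom_dvd: "rhom h \<Longrightarrow> x dvd y \<Longrightarrow> h x dvd h y"
  by (metis dvdE dvdI rhomD(4))

lemma pconst_pconst_rhom: "rhom (\<lambda>c. [:[:c:]:])"
  using rhom_comp[OF rhom_pConst rhom_pConst] by simp

locale hctx =
  fixes A :: "'a::{field,finite} mpoly" and m :: nat and b :: "'a list" and r :: 'a and d :: nat
  assumes A_vars: "mvars_in A {..m}"
    and root: "poly (mpoly_eval (\<lambda>c. [:c:]) A (\<lambda>i. if i < m then [:b ! i:] else [:0, 1:])) r = 0"
    and deriv: "poly (pderiv (mpoly_eval (\<lambda>c. [:c:]) A (\<lambda>i. if i < m then [:b ! i:] else [:0, 1:]))) r \<noteq> 0"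
begin

definition Ab where "Ab = mpoly_eval (\<lambda>c. [:c:]) A (\<lambda>i. if i < m then [:b ! i:] else [:0, 1:])"
definition Fu where "Fu u g = mpoly_eval (\<lambda>c. [:c:]) A (\<lambda>i. if i < m then [:b ! i, u ! i:] else g)"
definition Au where "Au u = mpoly_eval (\<lambda>c. [:[:c:]:]) A (\<lambda>i. if i < m then [:[:b ! i, u ! i:]:] else [:0, 1:])"

lemma Ab_root: "poly Ab r = 0" using root by (simp add: Ab_def)
lemma Ab_deriv: "poly (pderiv Ab) r \<noteq> 0" using deriv by (simp add: Ab_def)

lemma Au_poly: "poly (Au u) g = Fu u g"
  unfolding Au_def Fu_def mpoly_eval_hom[OF rhom_poly]
  by (rule arg_cong2[where f="\<lambda>a b. mpoly_eval a A b"]) (auto simp: fun_eq_iff)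

lemma Au_psi0: "map_poly (\<lambda>x. poly x 0) (Au u) = Ab"
  unfolding Au_def Ab_def mpoly_eval_hom[OF rhom_map_poly[OF rhom_poly]]
  by (rule arg_cong2[where f="\<lambda>a b. mpoly_eval a A b"]) (auto simp: fun_eq_iff map_poly_pCons)

lemma Fu_at0: "poly (Fu u g) 0 = poly Ab (poly g 0)"
  using poly_rhom[OF rhom_poly, of "Au u" g 0] by (simp add: Au_poly Au_psi0)

lemma Au_deriv: "poly (poly (pderiv (Au u)) g) 0 = poly (pderiv Ab) (poly g 0)"
  using psi0_pderiv[of "Au u" g] by (simp add: Au_psi0)

lemma uniq_line:
  assumes "degree g1 \<le> d" "degree g2 \<le> d" "poly g1 0 = r" "poly g2 0 = r"
    "monom 1 (Suc d) dvd Fu u g1" "monom 1 (Suc d) dvd Fu u g2"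
  shows "g1 = g2"
proof -
  have "monom 1 (Suc d) dvd g1 - g2"
    by (rule hensel_unique[where f="Au u" and g=g1 and h=g2]) (use assms Ab_deriv in \<open>simp_all add: Au_poly Au_deriv\<close>)
  moreover have "degree (g1 - g2) < Suc d" using assms(1,2) degree_diff_le[of g1 d g2] by simp
  ultimately have "g1 - g2 = 0" by (rule monom_dvd_deg_zero)
  then show ?thesis by simp
qed

end




context hctx
begin

definition fgen :: "'a mpoly poly poly" where
  "fgen = mpoly_eval (\<lambda>c. [:[:mpoly_const c:]:]) A
     (\<lambda>i. if i < m then [:[:mpoly_const (b ! i), mpoly_var i:]:] else [:0, 1:])"
definition cinv where "cinv = mpoly_const (inverse (poly (pderiv Ab) r))"
definition G where "G = hs fgen (mpoly_const r) cinv d"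
definition evu :: "'a list \<Rightarrow> 'a mpoly \<Rightarrow> 'a" where "evu u x = mpoly_eval (\<lambda>c. c) x (\<lambda>i. if i < m then u ! i else 0)"

lemma rhom_evu: "rhom (evu u)"
  unfolding evu_def[abs_def] by (rule rhom_mpoly_eval[OF rhom_id])

lemma evu_const [simp]: "evu u (mpoly_const c) = c"
  by (simp add: evu_def rhom_id)
lemma evu_var [simp]: "evu u (mpoly_var i) = (if i < m then u ! i else 0)"
  by (simp add: evu_def rhom_id)
lemma evu_0 [simp]: "evu u 0 = 0" by (simp add: rhomD[OF rhom_evu])
lemma evu_1 [simp]: "evu u 1 = 1" by (simp add: rhomD[OF rhom_evu])

lemma fgen_psi0: "map_poly (\<lambda>x. poly x 0) fgen = map_poly mpoly_const Ab"
proof -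
  have "map_poly (\<lambda>x. poly x 0) fgen = mpoly_eval (\<lambda>c. [:mpoly_const c:]) A (\<lambda>i. if i < m then [:mpoly_const (b ! i):] else [:0, 1:])"
    unfolding fgen_def mpoly_eval_hom[OF rhom_map_poly[OF rhom_poly]]
    by (rule arg_cong2[where f="\<lambda>a b. mpoly_eval a A b"]) (auto simp: fun_eq_iff map_poly_pCons)
  also have "\<dots> = map_poly mpoly_const Ab"
    unfolding Ab_def mpoly_eval_hom[OF rhom_map_poly[OF rhom_mpoly_const]]
    by (rule arg_cong2[where f="\<lambda>a b. mpoly_eval a A b"])
       (auto simp: fun_eq_iff map_poly_pCons rhomD[OF rhom_mpoly_const])
  finally show ?thesis .
qed

lemma fgen_spec: "map_poly (map_poly (evu u)) fgen = Au u"
  unfolding fgen_def Au_def mpoly_eval_hom[OF rhom_map_poly[OF rhom_map_poly[OF rhom_evu]]]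
  by (rule arg_cong2[where f="\<lambda>a b. mpoly_eval a A b"]) (auto simp: fun_eq_iff map_poly_pCons)

lemma G_dvd: "monom 1 (Suc d) dvd poly fgen G"
  unfolding G_def
proof (rule hs_dvd)
  show "poly (map_poly (\<lambda>x. poly x 0) fgen) (mpoly_const r) = 0"
    using poly_rhom[OF rhom_mpoly_const, of Ab r] Ab_root
    by (simp add: fgen_psi0 rhomD[OF rhom_mpoly_const])
  have "poly (pderiv (map_poly mpoly_const Ab)) (mpoly_const r) = mpoly_const (poly (pderiv Ab) r)"
    using poly_rhom[OF rhom_mpoly_const, of "pderiv Ab" r] map_poly_pderiv_rhom[OF rhom_mpoly_const, of Ab]
    by simp
  then show "cinv * poly (pderiv (map_poly (\<lambda>x. poly x 0) fgen)) (mpoly_const r) = 1"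
    using Ab_deriv
    by (simp add: fgen_psi0 cinv_def rhomD(4)[OF rhom_mpoly_const, symmetric] rhomD(2)[OF rhom_mpoly_const])
qed

lemma G_coeff0: "coeff G 0 = mpoly_const r"
  unfolding G_def by (rule hs_coeff0)

lemma G_degree: "degree G \<le> d"
  unfolding G_def by (rule hs_degree)

lemma G_spec:
  assumes "degree g \<le> d" "poly g 0 = r" "Fu u g = 0"
  shows "map_poly (evu u) G = g"
proof (rule uniq_line)
  let ?H = "map_poly (evu u)"
  have H: "rhom ?H" by (rule rhom_map_poly[OF rhom_evu])
  show "degree (?H G) \<le> d" using G_degree map_poly_degree_leq[of "evu u" G] by linarith
  show "degree g \<le> d" "poly g 0 = r" by (fact assms)+
  show "poly (?H G) 0 = r"
    using poly_rhom[OF rhom_evu, where p=G and x=0] G_coeff0 by (simp add: poly_0_coeff_0)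
  have "?H (poly fgen G) = poly (Au u) (?H G)"
    using poly_rhom[OF H, of fgen G] by (simp add: fgen_spec)
  moreover have "?H (monom 1 (Suc d)) dvd ?H (poly fgen G)" by (rule rhom_dvd[OF H G_dvd])
  ultimately show "monom 1 (Suc d) dvd Fu u (?H G)" by (simp add: map_poly_monom Au_poly)
  show "monom 1 (Suc d) dvd Fu u g" using assms(3) by simp
qed

end




definition good :: "'a::comm_ring_1 mpoly poly \<Rightarrow> bool" where
  "good g \<longleftrightarrow> (\<forall>j. total_deg (coeff g j) \<le> j)"

lemma good_0 [simp]: "good 0" by (simp add: good_def)
lemma good_1 [simp]: "good (1 :: 'a::comm_ring_1 mpoly poly)" by (simp add: good_def coeff_1)
lemma good_add: "good x \<Longrightarrow> good y \<Longrightarrow> good (x + y)"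
  unfolding good_def
proof
  fix j assume "\<forall>j. total_deg (coeff x j) \<le> j" "\<forall>j. total_deg (coeff y j) \<le> j"
  then have "total_deg (coeff x j) \<le> j" "total_deg (coeff y j) \<le> j" by auto
  then show "total_deg (coeff (x + y) j) \<le> j"
    using total_deg_add[of "coeff x j" "coeff y j"] by simp
qed
lemma good_mult: "good x \<Longrightarrow> good y \<Longrightarrow> good (x * y)"
  unfolding good_def
proof
  fix n assume gx: "\<forall>j. total_deg (coeff x j) \<le> j" and gy: "\<forall>j. total_deg (coeff y j) \<le> j"
  show "total_deg (coeff (x * y) n) \<le> n" unfolding coeff_mult
  proof (rule total_deg_sum)
    fix i assume i: "i \<in> {..n}"
    have "total_deg (coeff x i * coeff y (n - i)) \<le> total_deg (coeff x i) + total_deg (coeff y (n - i))"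
      by (rule total_deg_mult)
    also have "\<dots> \<le> i + (n - i)" using gx gy by (simp add: add_mono)
    finally show "total_deg (coeff x i * coeff y (n - i)) \<le> n" using i by simp
  qed
qed
lemma good_lin [simp]: "good [:mpoly_const c, mpoly_var i:]"
  by (simp add: good_def coeff_pCons split: nat.splits)
lemma good_pconst [simp]: "good [:mpoly_const c:]"
  by (simp add: good_def coeff_pCons split: nat.splits)

context hctx
begin

lemma poly_fgen: "poly fgen g = mpoly_eval (\<lambda>c. [:mpoly_const c:]) A
     (\<lambda>i. if i < m then [:mpoly_const (b ! i), mpoly_var i:] else g)"
  unfolding fgen_def mpoly_eval_hom[OF rhom_poly]
  by (rule arg_cong2[where f="\<lambda>a b. mpoly_eval a A b"]) (auto simp: fun_eq_iff)

lemma good_fgen: "good g \<Longrightarrow> good (poly fgen g)"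
  unfolding poly_fgen
  by (rule eval_closed[where Pr=good]) (auto intro: good_add good_mult)

lemma hs_good: "good (hs fgen (mpoly_const r) cinv k)"
proof (induction k)
  case 0 then show ?case by simp
next
  case (Suc k)
  define h where "h = hs fgen (mpoly_const r) cinv k"
  define e where "e = coeff (poly fgen h) (Suc k)"
  have gh: "good h" using Suc.IH by (simp add: h_def)
  then have ge: "total_deg e \<le> Suc k" using good_fgen[OF gh] by (simp add: good_def e_def)
  have ce: "total_deg (cinv * e) \<le> Suc k"
    using total_deg_mult[of cinv e] ge by (simp add: cinv_def)
  have "good (h - monom (cinv * e) (Suc k))" unfolding good_def
  proof
    fix j
    show "total_deg (coeff (h - monom (cinv * e) (Suc k)) j) \<le> j"
    proof (cases "j = Suc k")
      case True
      then show ?thesis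
      proof -
        have "total_deg (coeff h (Suc k)) \<le> Suc k" using gh by (simp add: good_def)
        then have "total_deg (coeff h (Suc k) - cinv * e) \<le> Suc k"
          using total_deg_diff[of "coeff h (Suc k)" "cinv * e"] ce by linarith
        then show ?thesis using True by (simp add: coeff_monom)
      qed
    next
      case False
      then show ?thesis using gh by (simp add: good_def coeff_monom)
    qed
  qed
  then show ?case by (simp add: h_def e_def)
qed

definition P :: "'a mpoly" where
  "P = mpoly_eval mpoly_const (poly G 1) (\<lambda>i. if i < m then mpoly_var i - mpoly_const (b ! i) else 0)"

lemma polyG1_deg: "total_deg (poly G 1) \<le> d"
proof -
  have "poly G 1 = (\<Sum>i\<le>degree G. coeff G i * 1 ^ i)" by (rule poly_altdef)
  also have "total_deg \<dots> \<le> d"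
  proof (rule total_deg_sum)
    fix i assume i: "i \<in> {..degree G}"
    have "total_deg (coeff G i) \<le> i" using hs_good[of d] by (simp add: good_def G_def)
    then show "total_deg (coeff G i * 1 ^ i) \<le> d" using i G_degree by simp
  qed
  finally show ?thesis .
qed

lemma P_deg: "total_deg P \<le> d"
proof -
  have "total_deg P \<le> weighted_deg (\<lambda>i. total_deg (if i < m then mpoly_var i - mpoly_const (b ! i) else 0 :: 'a mpoly)) (poly G 1)"
    unfolding P_def by (rule total_deg_eval) simp
  also have "\<dots> \<le> weighted_deg (\<lambda>_. 1) (poly G 1)"
  proof (rule wd_mono)
    fix \<alpha> i
    show "total_deg (if i < m then mpoly_var i - mpoly_const (b ! i) else 0 :: 'a mpoly) \<le> 1"
      using total_deg_diff[of "mpoly_var i :: 'a mpoly" "mpoly_const (b ! i)"] by auto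
  qed
  also have "\<dots> \<le> d" using polyG1_deg by (simp add: total_deg_def)
  finally show ?thesis .
qed

lemma P_vars: "mvars_in P {..<m}"
  unfolding P_def
  by (rule mvars_in_eval) (auto intro!: mvars_in_diff mvars_in_var)

lemma P_eval:
  assumes "\<And>i. i < m \<Longrightarrow> x i = b ! i + u ! i"
  shows "mpoly_eval (\<lambda>c. c) P x = poly (map_poly (evu u) G) 1"
proof -
  have H: "rhom (\<lambda>z. mpoly_eval (\<lambda>c. c) z x)" by (rule rhom_mpoly_eval[OF rhom_id])
  have "mpoly_eval (\<lambda>c. c) P x = mpoly_eval (\<lambda>c. c) (poly G 1) (\<lambda>i. if i < m then u ! i else 0)"
    unfolding P_def mpoly_eval_hom[OF H]
    by (rule arg_cong2[where f="\<lambda>a b. mpoly_eval a (poly G 1) b"])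
       (auto simp: fun_eq_iff rhom_id mpoly_eval_add mpoly_eval_mult rhom_diff[OF H] assms)
  also have "\<dots> = evu u (poly G 1)" by (simp add: evu_def)
  also have "\<dots> = poly (map_poly (evu u) G) 1" using poly_rhom[OF rhom_evu, where p=G and x=1] by simp
  finally show ?thesis .
qed

end




context hctx
begin

definition Q :: "'a mpoly" where
  "Q = mpoly_eval mpoly_const A (\<lambda>i. if i < m then mpoly_var i else P)"

lemma Fu_const_r: "Fu (replicate m 0) [:r:] = 0"
proof -
  have "Fu (replicate m 0) [:r:] = mpoly_eval (\<lambda>c. [:c:]) A (\<lambda>i. [:if i < m then b ! i else r:])"
    unfolding Fu_def by (rule arg_cong2[where f="\<lambda>a b. mpoly_eval a A b"]) (auto simp: fun_eq_iff)
  also have "\<dots> = [:mpoly_eval (\<lambda>c. c) A (\<lambda>i. if i < m then b ! i else r):]"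
    using mpoly_eval_hom[OF rhom_pConst, of "\<lambda>c. c" A "\<lambda>i. if i < m then b ! i else r"] by simp
  also have "mpoly_eval (\<lambda>c. c) A (\<lambda>i. if i < m then b ! i else r) = poly Ab r"
    unfolding Ab_def mpoly_eval_hom[OF rhom_poly]
    by (rule arg_cong2[where f="\<lambda>a b. mpoly_eval a A b"]) (auto simp: fun_eq_iff)
  finally show ?thesis using Ab_root by simp
qed

lemma P_at_b: "mpoly_eval (\<lambda>c. c) P (\<lambda>i. b ! i) = r"
proof -
  have "mpoly_eval (\<lambda>c. c) P (\<lambda>i. b ! i) = poly (map_poly (evu (replicate m 0)) G) 1"
    by (rule P_eval) simp
  also have "map_poly (evu (replicate m 0)) G = [:r:]"
    by (rule G_spec) (simp_all add: Fu_const_r)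
  finally show ?thesis by simp
qed

lemma Q_vars: "mvars_in Q {..<m}"
  unfolding Q_def
proof (rule mvars_in_eval)
  fix \<alpha> i assume "\<alpha> \<in> Poly_Mapping.keys A" "i \<in> Poly_Mapping.keys \<alpha>"
  show "mvars_in (if i < m then mpoly_var i else P) {..<m}"
    using P_vars by (auto intro: mvars_in_var)
qed

lemma Q_deg:
  assumes "weighted_deg (\<lambda>i. if i = m then d else 1) A \<le> D"
  shows "total_deg Q \<le> D"
proof -
  have "total_deg Q \<le> weighted_deg (\<lambda>i. total_deg (if i < m then mpoly_var i else P)) A"
    unfolding Q_def by (rule total_deg_eval) simp
  also have "\<dots> \<le> weighted_deg (\<lambda>i. if i = m then d else 1) A"
  proof (rule wd_mono)
    fix \<alpha> i assume "\<alpha> \<in> Poly_Mapping.keys A" "i \<in> Poly_Mapping.keys \<alpha>"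
    then have "i \<le> m" using mvars_in_keys[OF A_vars] by auto
    then show "total_deg (if i < m then mpoly_var i else P) \<le> (if i = m then d else 1)"
      using P_deg by auto
  qed
  finally show ?thesis using assms by linarith
qed

lemma Q_at:
  assumes "degree g \<le> d" "poly g 0 = r" "Fu u g = 0"
  shows "mpoly_eval (\<lambda>c. c) Q (\<lambda>i. if i < m then u ! i + b ! i else 0) = 0"
proof -
  let ?x = "\<lambda>i. if i < m then u ! i + b ! i else 0"
  have H: "rhom (\<lambda>z. mpoly_eval (\<lambda>c. c) z ?x)" by (rule rhom_mpoly_eval[OF rhom_id])
  have Px: "mpoly_eval (\<lambda>c. c) P ?x = poly g 1"
    using P_eval[of ?x u] G_spec[OF assms] by (simp add: add.commute)
  have "mpoly_eval (\<lambda>c. c) Q ?x = mpoly_eval (\<lambda>c. c) A (\<lambda>i. if i < m then u ! i + b ! i else poly g 1)"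
    unfolding Q_def mpoly_eval_hom[OF H]
    by (rule arg_cong2[where f="\<lambda>a b. mpoly_eval a A b"]) (auto simp: fun_eq_iff rhom_id Px)
  also have "\<dots> = poly (Fu u g) 1"
    unfolding Fu_def mpoly_eval_hom[OF rhom_poly]
    by (rule arg_cong2[where f="\<lambda>a b. mpoly_eval a A b"]) (auto simp: fun_eq_iff add.commute)
  finally show ?thesis using assms(3) by simp
qed

lemma Q_zero:
  assumes m1: "m \<ge> 1" and wd: "weighted_deg (\<lambda>i. if i = m then d else 1) A \<le> D"
    and T: "\<And>u. u \<in> T \<Longrightarrow> length u = m \<and> degree (g u) \<le> d \<and> poly (g u) 0 = r \<and> Fu u (g u) = 0"
    and big: "card T > D * card (UNIV :: 'a set) ^ (m - 1)"
  shows "Q = 0"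
proof -
  define y where "y i = (if i < m then mpoly_var i + mpoly_const (b ! i) else 0 :: 'a mpoly)" for i
  define Qt where "Qt = mpoly_eval mpoly_const Q y"
  have Qt_vars: "mvars_in Qt {..<m}"
    unfolding Qt_def by (rule mvars_in_eval) (auto simp: y_def intro!: mvars_in_add mvars_in_var)
  have "total_deg Qt \<le> weighted_deg (\<lambda>i. total_deg (y i)) Q"
    unfolding Qt_def by (rule total_deg_eval) simp
  also have "\<dots> \<le> weighted_deg (\<lambda>_. 1) Q"
  proof (rule wd_mono)
    fix \<alpha> i
    show "total_deg (y i) \<le> 1"
      using total_deg_add[of "mpoly_var i :: 'a mpoly" "mpoly_const (b ! i)"] by (auto simp: y_def)
  qed
  also have "\<dots> \<le> D" using Q_deg[OF wd] by (simp add: total_deg_def)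
  finally have Qt_deg: "total_deg Qt \<le> D" .
  have Qt_at: "ev_at u Qt = 0" if "u \<in> T" for u
  proof -
    have "ev_at u Qt = mpoly_eval (\<lambda>c. c) Q (\<lambda>i. ev_at u (y i))"
      unfolding Qt_def mpoly_eval_hom[OF rhom_ev_at] by simp
    also have "(\<lambda>i. ev_at u (y i)) = (\<lambda>i. if i < m then u ! i + b ! i else 0)"
      by (auto simp: fun_eq_iff y_def rhomD[OF rhom_ev_at])
    moreover have "mpoly_eval (\<lambda>c. c) Q (\<lambda>i. if i < m then u ! i + b ! i else 0) = 0"
      using T[OF that] by (intro Q_at[of "g u" u]) auto
    ultimately show ?thesis by simp
  qed
  have Qt0: "Qt = 0"
  proof (rule ccontr)
    assume nz: "Qt \<noteq> 0"
    let ?q = "card (UNIV :: 'a set)"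
    have "T \<subseteq> {u. length u = m \<and> ev_at u Qt = 0}" using T Qt_at by auto
    then have "card T \<le> card {u. length u = m \<and> ev_at u Qt = 0}"
      by (rule card_mono[OF finite_subset[OF _ fin_len[of m]], rotated]) auto
    then have "card T * ?q \<le> total_deg Qt * ?q ^ m"
      using SZ[OF Qt_vars nz] by (meson le_trans mult_le_mono1)
    also have "\<dots> \<le> D * ?q ^ m" using Qt_deg by (simp add: mult_le_mono1)
    also have "\<dots> = (D * ?q ^ (m - 1)) * ?q" using m1 by (cases m) (simp_all add: algebra_simps)
    moreover have "?q > 0" by (simp add: finite_UNIV_card_ge_0)
    ultimately have "card T \<le> D * ?q ^ (m - 1)" by simp
    then show False using big by simp
  qed
  define z where "z i = (if i < m then mpoly_var i - mpoly_const (b ! i) else 0 :: 'a mpoly)" for i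
  have H: "rhom (\<lambda>w. mpoly_eval mpoly_const w z)" by (rule rhom_mpoly_eval[OF rhom_mpoly_const])
  have "mpoly_eval mpoly_const Qt z = mpoly_eval mpoly_const Q (\<lambda>i. if i < m then mpoly_var i else 0)"
    unfolding Qt_def mpoly_eval_hom[OF H]
    by (rule arg_cong2[where f="\<lambda>a b. mpoly_eval a Q b"])
       (auto simp: fun_eq_iff rhom_mpoly_const y_def z_def mpoly_eval_add)
  also have "\<dots> = mpoly_eval mpoly_const Q mpoly_var"
    by (rule mpoly_eval_cong) (use mvars_in_keys[OF Q_vars] in auto)
  also have "\<dots> = Q" by (rule mpoly_eval_var_id)
  finally show ?thesis using Qt0 by simp
qed

lemma line_P:
  assumes Q0: "Q = 0" and "degree g \<le> d" "poly g 0 = r" "Fu u g = 0"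
  shows "mpoly_eval (\<lambda>c. [:c:]) P (\<lambda>i. [:b ! i, u ! i:]) = g"
proof (rule uniq_line)
  let ?g = "mpoly_eval (\<lambda>c. [:c:]) P (\<lambda>i. [:b ! i, u ! i:])"
  show "degree g \<le> d" "poly g 0 = r" by (fact assms)+
  show "monom 1 (Suc d) dvd Fu u g" using assms by simp
  have "degree ?g \<le> weighted_deg (\<lambda>i. degree [:b ! i, u ! i:]) P"
    by (rule degree_eval) simp
  also have "\<dots> \<le> weighted_deg (\<lambda>_. 1) P" by (rule wd_mono) simp
  also have "\<dots> \<le> d" using P_deg by (simp add: total_deg_def)
  finally show "degree ?g \<le> d" .
  have "poly ?g 0 = mpoly_eval (\<lambda>c. c) P (\<lambda>i. b ! i)"
    unfolding mpoly_eval_hom[OF rhom_poly] by simp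
  then show "poly ?g 0 = r" using P_at_b by simp
  have H: "rhom (\<lambda>w. mpoly_eval (\<lambda>c. [:c:]) w (\<lambda>i. [:b ! i, u ! i:]))"
    by (rule rhom_mpoly_eval[OF rhom_pConst])
  have "mpoly_eval (\<lambda>c. [:c:]) Q (\<lambda>i. [:b ! i, u ! i:]) = Fu u ?g"
    unfolding Q_def Fu_def mpoly_eval_hom[OF H]
    by (rule arg_cong2[where f="\<lambda>a b. mpoly_eval a A b"]) (auto simp: fun_eq_iff rhom_pConst)
  then show "monom 1 (Suc d) dvd Fu u ?g" using Q0 by simp
qed

end




lemma Fu0_general:
  fixes A :: "'a::field mpoly"
  shows "poly (mpoly_eval (\<lambda>c. [:c:]) A (\<lambda>i. if i < m then [:b ! i, u ! i:] else g)) 0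
       = poly (mpoly_eval (\<lambda>c. [:c:]) A (\<lambda>i. if i < m then [:b ! i:] else [:0, 1:])) (poly g 0)"
proof -
  have "poly (mpoly_eval (\<lambda>c. [:c:]) A (\<lambda>i. if i < m then [:b ! i, u ! i:] else g)) 0
      = mpoly_eval (\<lambda>c. c) A (\<lambda>i. if i < m then b ! i else poly g 0)"
    unfolding mpoly_eval_hom[OF rhom_poly]
    by (rule arg_cong2[where f="\<lambda>a b. mpoly_eval a A b"]) (auto simp: fun_eq_iff)
  also have "\<dots> = poly (mpoly_eval (\<lambda>c. [:c:]) A (\<lambda>i. if i < m then [:b ! i:] else [:0, 1:])) (poly g 0)"
    unfolding mpoly_eval_hom[OF rhom_poly]
    by (rule arg_cong2[where f="\<lambda>a b. mpoly_eval a A b"]) (auto simp: fun_eq_iff)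
  finally show ?thesis .
qed

lemma wd_deg_in:
  "weighted_deg (\<lambda>i. if i = m then 1 else 0) A \<le> deg_in A m"
proof (rule wd_le)
  fix \<alpha> assume a: "\<alpha> \<in> Poly_Mapping.keys A"
  have "mw (\<lambda>i. if i = m then 1 else 0) \<alpha> \<le> Poly_Mapping.lookup \<alpha> m"
  proof -
    have "(\<lambda>i. (if i = m then 1 else 0) * Poly_Mapping.lookup \<alpha> i) = (\<lambda>i. if i = m then Poly_Mapping.lookup \<alpha> i else 0)"
      by auto
    then show ?thesis unfolding mw_def by (simp only:) (simp add: sum.delta)
  qed
  also have "\<dots> \<le> deg_in A m" unfolding deg_in_def by (rule Max_ge) (use a in auto)
  finally show "mw (\<lambda>i. if i = m then 1 else 0) \<alpha> \<le> deg_in A m" .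
qed

theorem lemma3p1:
  fixes A :: "'a::{field,finite} mpoly"
    and m d dz D :: nat
    and b :: "'a list"
    and S :: "'a list set"
    and Pbu :: "'a list \<Rightarrow> 'a poly"
  assumes m: "m \<ge> 1"
    and dz: "dz \<ge> 1"
    and A_vars: "mvars_in A {..m}"
    and A_nz: "A \<noteq> 0"
    and A_degz: "deg_in A m \<le> dz"
    and A_wdeg: "weighted_deg (\<lambda>i. if i = m then d else 1) A \<le> D"
    and b_len: "length b = m"
    and b_sep: "rsquarefree (map_poly to_ac
                  (mpoly_eval (\<lambda>c. [:c:]) A (\<lambda>i. if i < m then [:b ! i:] else [:0, 1:])))"
    and S_dim: "\<forall>u\<in>S. length u = m"
    and Pbu: "\<forall>u\<in>S. degree (Pbu u) \<le> d \<and>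
               mpoly_eval (\<lambda>c. [:c:]) A (\<lambda>i. if i < m then [:b ! i, u ! i:] else Pbu u) = 0"
    and S_large: "card S > dz * D * card (UNIV :: 'a set) ^ (m - 1)"
  shows "\<exists>P :: 'a mpoly. mvars_in P {..<m} \<and> total_deg P \<le> d \<and>
           mpoly_eval mpoly_const A (\<lambda>i. if i < m then mpoly_var i else P) = 0 \<and>
           (\<exists>S'\<subseteq>S. real (card S') \<ge> real (card S) / real dz \<and>
              (\<forall>u\<in>S'. mpoly_eval (\<lambda>c. [:c:]) P (\<lambda>i. [:b ! i, u ! i:]) = Pbu u))"
proof -
  define Ab where "Ab = mpoly_eval (\<lambda>c. [:c:]) A (\<lambda>i. if i < m then [:b ! i:] else [:0, 1:])"
  have Ab_nz: "Ab \<noteq> 0" using b_sep by (auto simp: rsquarefree_def Ab_def)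
  define Rt where "Rt = {x. poly Ab x = 0}"
  have finRt: "finite Rt" unfolding Rt_def using Ab_nz by (rule poly_roots_finite)
  have "degree Ab \<le> weighted_deg (\<lambda>i. degree (if i < m then [:b ! i:] else [:0, 1 :: 'a:])) A"
    unfolding Ab_def by (rule degree_eval) simp
  also have "\<dots> \<le> weighted_deg (\<lambda>i. if i = m then 1 else 0) A"
  proof (rule wd_mono)
    fix \<alpha> i assume "\<alpha> \<in> Poly_Mapping.keys A" "i \<in> Poly_Mapping.keys \<alpha>"
    then have "i \<le> m" using mvars_in_keys[OF A_vars] by auto
    then show "degree (if i < m then [:b ! i:] else [:0, 1 :: 'a:]) \<le> (if i = m then 1 else 0)" by auto
  qed
  also have "\<dots> \<le> deg_in A m" by (rule wd_deg_in)
  finally have degAb: "degree Ab \<le> dz" using A_degz by linarith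
  have cardRt: "card Rt \<le> dz" using card_poly_roots_bound[OF Ab_nz] degAb by (simp add: Rt_def)
  define Sx where "Sx x = {u \<in> S. poly (Pbu u) 0 = x}" for x
  have root_in: "poly (Pbu u) 0 \<in> Rt" if "u \<in> S" for u
  proof -
    have "poly Ab (poly (Pbu u) 0) = poly (mpoly_eval (\<lambda>c. [:c:]) A (\<lambda>i. if i < m then [:b ! i, u ! i:] else Pbu u)) 0"
      unfolding Ab_def by (rule Fu0_general[symmetric])
    also have "\<dots> = 0" using Pbu that by simp
    finally show ?thesis by (simp add: Rt_def)
  qed
  have S_un: "S = (\<Union>x\<in>Rt. Sx x)" using root_in by (auto simp: Sx_def)
  have "S \<noteq> {}" using S_large by auto
  then have "Rt \<noteq> {}" using S_un by auto
  define M where "M = Max ((\<lambda>x. card (Sx x)) ` Rt)"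
  have "M \<in> (\<lambda>x. card (Sx x)) ` Rt" unfolding M_def using finRt \<open>Rt \<noteq> {}\<close> by (intro Max_in) auto
  then obtain r where r: "r \<in> Rt" "card (Sx r) = M" by auto
  have Mge: "card (Sx x) \<le> M" if "x \<in> Rt" for x unfolding M_def using finRt that by (intro Max_ge) auto
  have "card S \<le> (\<Sum>x\<in>Rt. card (Sx x))" unfolding S_un by (rule card_UN_le[OF finRt])
  also have "\<dots> \<le> (\<Sum>x\<in>Rt. M)" by (rule sum_mono) (rule Mge)
  also have "\<dots> = card Rt * M" by simp
  also have "\<dots> \<le> dz * M" using cardRt by (rule mult_le_mono1)
  finally have cardS: "card S \<le> dz * card (Sx r)" using r by simp
  have rroot: "poly Ab r = 0" using r by (simp add: Rt_def)
  have rder: "poly (pderiv Ab) r \<noteq> 0" using rsqf_deriv[OF b_sep[folded Ab_def] rroot] .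
  interpret H: hctx A m b r d
    by unfold_locales (use A_vars rroot rder in \<open>simp_all add: Ab_def\<close>)
  have T: "length u = m \<and> degree (Pbu u) \<le> d \<and> poly (Pbu u) 0 = r \<and> H.Fu u (Pbu u) = 0"
    if "u \<in> Sx r" for u
    using that S_dim Pbu by (auto simp: Sx_def H.Fu_def)
  have big: "card (Sx r) > D * card (UNIV :: 'a set) ^ (m - 1)"
  proof -
    have "dz * (D * card (UNIV :: 'a set) ^ (m - 1)) < card S"
      using S_large by (simp add: mult.assoc)
    then have "dz * (D * card (UNIV :: 'a set) ^ (m - 1)) < dz * card (Sx r)"
      using cardS by linarith
    then show ?thesis using dz by simp
  qed
  have Q0: "H.Q = 0" by (rule H.Q_zero[OF m A_wdeg T big])
  show ?thesis
  proof (intro exI[of _ H.P] conjI)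
    show "mvars_in H.P {..<m}" by (rule H.P_vars)
    show "total_deg H.P \<le> d" by (rule H.P_deg)
    show "mpoly_eval mpoly_const A (\<lambda>i. if i < m then mpoly_var i else H.P) = 0"
      using Q0 by (simp add: H.Q_def)
    show "\<exists>S'\<subseteq>S. real (card S') \<ge> real (card S) / real dz \<and>
              (\<forall>u\<in>S'. mpoly_eval (\<lambda>c. [:c:]) H.P (\<lambda>i. [:b ! i, u ! i:]) = Pbu u)"
    proof (intro exI[of _ "Sx r"] conjI ballI)
      show "Sx r \<subseteq> S" by (auto simp: Sx_def)
      have "real (card S) \<le> real dz * real (card (Sx r))" using cardS by (metis of_nat_le_iff of_nat_mult)
      then show "real (card S) / real dz \<le> real (card (Sx r))"
        using dz by (simp add: divide_le_eq mult.commute)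
      fix u assume "u \<in> Sx r"
      then show "mpoly_eval (\<lambda>c. [:c:]) H.P (\<lambda>i. [:b ! i, u ! i:]) = Pbu u"
        using T by (intro H.line_P[OF Q0]) auto
    qed
  qed
qed



end
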